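(* Consider the multi-good panel bundle model described in the context, under the maintained restrictions there (at most two goods purchased per period; $\Gamma_{j_1j_2}\le 0$ for every bundle $j_1j_2\ne AB$) and the stationarity assumption. Then for any $(x_s,x_t)$ and any $s\ne t\le T$: (i) for each good $j\in\mathcal L$: if $P_s(\{j\}\mid x_s,x_t)>P_t(\{j\}\mid x_s,x_t)$, then $\Delta_{s,t}\delta_j>0$ or there is $k\in\mathcal L$, $k\ne j$, with $\Delta_{s,t}\delta_k<0$; (ii) for each bundle $j_1j_2$ with $j_1\ne j_2\in\mathcal L$: if $P_s(\{j_1j_2\}\mid x_s,x_t)>P_t(\{j_1j_2\}\mid x_s,x_t)$, then there is $j\in\{j_1,j_2\}$ with $\Delta_{s,t}\delta_j>0$, or there is $k\in\mathcal L\setminus\{j_1,j_2\}$ with $\Delta_{s,t}\delta_k<0$; (iii) for $\ell\in\{A,B\}$ with $\ell_{-1}$ the other of $A,B$: if $P_s(D_\ell\mid x_s,x_t)>P_t(D_\ell\mid x_s,x_t)$ where $D_\ell=\{\ell,AB\}$, then at least one of the following holds: $\Delta_{s,t}\delta_\ell>0$; $\Delta_{s,t}(\delta_\ell+\operatorname{sign}(\Gamma_{AB})\delta_{\ell_{-1}})>0$; there is $k\in\mathcal L\setminus\{A,B\}$ with $\Delta_{s,t}(\delta_{\ell_{-1}}-\delta_k)>0$; there is $k\in\mathcal L\setminus\{A,B\}$ with $\Delta_{s,t}\delta_k<0$.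
   Context: Multi-good panel bundle model: consumers $i$, periods $t=1,\dots,T$, $T\ge2$ fixed; a finite set of goods $\mathcal L=\{A,B,\dots,J\}$. Consumers purchase at most two goods per period, so the choice set is $\mathcal C=\{O\}\cup\{j:j\in\mathcal L\}\cup\{j_1j_2:j_1\ne j_2\in\mathcal L\}$ ($j$ = only good $j$, $j_1j_2$ = the bundle of $j_1,j_2$, $O$ = outside option). Utilities: $u_{ijt}=X_{ijt}'\beta_0+\alpha_{ij}+\epsilon_{ijt}$ for $j\in\mathcal L$, with $X_{ijt}$ observed, $\alpha_{ij}$ unobserved time-invariant fixed effects, $\epsilon_{ijt}$ unobserved shocks; $u_{ij_1j_2t}=u_{ij_1t}+u_{ij_2t}+\Gamma_{j_1j_2}$ where $\Gamma_{j_1j_2}=\Gamma_{j_1j_2}(Z_i)$ depends only on an observed time-invariant covariate $Z_i$ (suppressed, so $\Gamma_{j_1j_2}$ is treated as a constant); $u_{iOt}=0$. $\Gamma_{AB}$ may have any sign; $\Gamma_{j_1j_2}\le0$ for all $j_1j_2\ne AB$. $Y_{it}\in\mathcal C$ is the utility-maximizing choice; ties have probability zero. Stationarity: for all $s,t\le T$, the distribution of $\epsilon_{is}=(\epsilon_{ijs})_{j\in\mathcal L}$ conditional on $(X_{is},X_{it},Z_i,\alpha_i)$ equals that of $\epsilon_{it}$ conditional on the same. Also some component of $X_{it}$ not in $Z_i$ has a nonzero coefficient. Notation: $P_t(K\mid x_s,x_t)=\Pr(Y_{it}\in K\mid X_{is}=x_s,X_{it}=x_t)$ (with $Z_i$ suppressed);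 $\delta_{jt}=x_{jt}'\beta_0$ for $j\in\mathcal L$; $\Delta_{s,t}\delta_j=\delta_{js}-\delta_{jt}$; $\operatorname{sign}(x)=\mathbb 1\{x>0\}-\mathbb 1\{x<0\}$. *)

theory Defs
  imports "HOL-Analysis.Analysis" "HOL-Probability.Probability"
begin

text \<open>Choice alternatives are represented as sets of goods of cardinality at most two:
  the empty set is the outside option O, a singleton {j} is "only good j", and a
  two-element set {j1, j2} is the bundle j1j2.\<close>

definition choices :: "'g set set" where
  "choices = {S. finite S \<and> card S \<le> 2}"

definition alt_util :: "('g set \<Rightarrow> real) \<Rightarrow> ('g \<Rightarrow> real) \<Rightarrow> 'g set \<Rightarrow> real" where
  "alt_util Gam u S = (\<Sum>j\<in>S. u j) + (if card S = 2 then Gam S else 0)"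

text \<open>The utility-maximizing choice (well defined when there are no ties).\<close>
definition choice :: "('g set \<Rightarrow> real) \<Rightarrow> ('g \<Rightarrow> real) \<Rightarrow> 'g set" where
  "choice Gam u = (SOME S. S \<in> choices \<and> (\<forall>S'\<in>choices. alt_util Gam u S' \<le> alt_util Gam u S))"

definition no_ties :: "('g set \<Rightarrow> real) \<Rightarrow> ('g \<Rightarrow> real) \<Rightarrow> bool" where
  "no_ties Gam u = (\<forall>S\<in>choices. \<forall>S'\<in>choices. S \<noteq> S' \<longrightarrow> alt_util Gam u S \<noteq> alt_util Gam u S')"

end

theory Submission
  imports Defs
begin


lemma finite_choices: "finite (choices :: ('g::finite) set set)"
  by (rule finite_subset[of _ UNIV]) auto

lemma alt_empty[simp]: "alt_util Gam u {} = 0" by (simp add: alt_util_def)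
lemma alt_single[simp]: "alt_util Gam u {x} = u x" by (simp add: alt_util_def)
lemma alt_pair[simp]: "x \<noteq> y \<Longrightarrow> alt_util Gam u {x,y} = u x + u y + Gam {x,y}"
  by (simp add: alt_util_def)

lemma choices_simps[simp]: "({}::'g::finite set) \<in> choices" "{x::'g::finite} \<in> choices" "{x::'g::finite, y} \<in> choices"
  by (auto simp: choices_def card_insert_if)

lemma choices_cases:
  assumes "S \<in> choices"
  obtains "S = {}" | x where "S = {x}" | x y where "x \<noteq> y" "S = {x,y}"
proof -
  from assms have f: "finite S" and c: "card S \<le> 2" by (auto simp: choices_def)
  then have "card S = 0 \<or> card S = 1 \<or> card S = 2" by linarith
  then show ?thesis
  proof (elim disjE)
    assume "card S = 0" then show ?thesis using f that(1) by simp
  next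
    assume "card S = 1" then show ?thesis using that(2) by (auto simp: card_1_singleton_iff)
  next
    assume "card S = 2" then show ?thesis using that(3) by (auto simp: card_2_iff)
  qed
qed

lemma choice_opt:
  fixes u :: "'g::finite \<Rightarrow> real"
  shows "choice Gam u \<in> choices \<and> (\<forall>S'\<in>choices. alt_util Gam u S' \<le> alt_util Gam u (choice Gam u))"
proof -
  let ?f = "alt_util Gam u"
  have fin: "finite (?f ` choices)" using finite_choices by blast
  have ne: "?f ` choices \<noteq> {}" using choices_simps(1) by blast
  obtain S where S: "S \<in> choices" "?f S = Max (?f ` choices)"
    using Max_in[OF fin ne] by auto
  have "\<forall>S'\<in>choices. ?f S' \<le> ?f S" using S fin by auto
  then have "\<exists>S. S \<in> choices \<and> (\<forall>S'\<in>choices. ?f S' \<le> ?f S)" using S by blast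
  then show ?thesis unfolding choice_def by (rule someI_ex)
qed

lemma choice_in:
  fixes u :: "'g::finite \<Rightarrow> real"
  assumes "K \<subseteq> choices" "no_ties Gam u" "\<forall>S\<in>choices. \<exists>T\<in>K. alt_util Gam u S \<le> alt_util Gam u T"
  shows "choice Gam u \<in> K"
proof -
  let ?C = "choice Gam u"
  have C: "?C \<in> choices" "\<forall>S'\<in>choices. alt_util Gam u S' \<le> alt_util Gam u ?C" using choice_opt by blast+
  then obtain T where T: "T \<in> K" "alt_util Gam u ?C \<le> alt_util Gam u T" using assms(3) by blast
  have "T \<in> choices" using T assms(1) by blast
  then have "alt_util Gam u ?C = alt_util Gam u T" using C T by force
  then have "?C = T" using assms(2) C \<open>T \<in> choices\<close> unfolding no_ties_def by blast
  then show ?thesis using T by simp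
qed

lemma alt_shift:
  "finite S \<Longrightarrow> alt_util Gam v' S = alt_util Gam v S + (\<Sum>j\<in>S. v' j - v j)"
  by (simp add: alt_util_def sum_subtractf)

lemma keep_T:
  fixes v v' :: "'g::finite \<Rightarrow> real"
  assumes T: "T \<in> choices" and opt: "\<forall>S\<in>choices. alt_util Gam v S \<le> alt_util Gam v T"
    and pos: "\<And>j. j \<in> T \<Longrightarrow> v' j - v j \<ge> 0" and neg: "\<And>j. j \<notin> T \<Longrightarrow> v' j - v j \<le> 0"
  shows "\<forall>S\<in>choices. \<exists>T'\<in>{T}. alt_util Gam v' S \<le> alt_util Gam v' T'"
proof
  fix S :: "'g set" assume S: "S \<in> choices"
  let ?d = "\<lambda>j. v' j - v j"
  have fS: "finite S" and fT: "finite T" using S T by (auto simp: choices_def)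
  have "sum ?d S = sum ?d (S \<inter> T) + sum ?d (S - T)"
    using fS by (metis Diff_Diff_Int Diff_disjoint Diff_partition Int_Diff_Un Int_commute inf_le1 sum.union_disjoint finite_Diff finite_Int)
  also have "sum ?d (S - T) \<le> 0" using neg by (intro sum_nonpos) auto
  moreover have "sum ?d (S \<inter> T) \<le> sum ?d T" using pos fT by (intro sum_mono2) auto
  ultimately have "sum ?d S \<le> sum ?d T" by linarith
  then show "\<exists>T'\<in>{T}. alt_util Gam v' S \<le> alt_util Gam v' T'"
    using alt_shift[OF fS, of Gam v' v] alt_shift[OF fT, of Gam v' v] opt S by force
qed

lemma part3_det:
  fixes v v' :: "'g::finite \<Rightarrow> real"
  assumes lm: "l \<noteq> m"
    and Gn: "\<And>x y. x \<noteq> y \<Longrightarrow> {x,y} \<noteq> {l,m} \<Longrightarrow> Gam {x,y} \<le> 0"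
    and T0: "T0 = {l} \<or> T0 = {l,m}"
    and opt: "\<forall>S\<in>choices. alt_util Gam v S \<le> alt_util Gam v T0"
    and c1: "v' l - v l \<ge> 0"
    and c2: "(v' l - v l) + sgn (Gam {l,m}) * (v' m - v m) \<ge> 0"
    and c3: "\<And>k. k \<notin> {l,m} \<Longrightarrow> v' k - v k \<le> v' m - v m"
    and c4: "\<And>k. k \<notin> {l,m} \<Longrightarrow> v' k - v k \<le> 0"
  shows "\<forall>S\<in>choices. \<exists>T\<in>{{l},{l,m}}. alt_util Gam v' S \<le> alt_util Gam v' T"
proof -
  let ?G = "Gam {l,m}"
  let ?P = "\<lambda>S. \<exists>T\<in>{{l},{l,m}}. alt_util Gam v' S \<le> alt_util Gam v' T"
  have o: "alt_util Gam v S \<le> alt_util Gam v T0"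
    if "S \<in> choices" for S :: "'g set" using opt that by blast
  have sg: "?G > 0 \<and> sgn ?G = 1 \<or> ?G = 0 \<and> sgn ?G = 0 \<or> ?G < 0 \<and> sgn ?G = -1"
    by (cases "?G > 0"; cases "?G = 0") auto
  have goal_l: "?P S" if "alt_util Gam v' S \<le> v' l" for S
    using that by auto
  have goal_lm: "?P S" if "alt_util Gam v' S \<le> v' l + v' m + ?G" for S
    using that lm by auto
  have aT0: "alt_util Gam v T0 = v l \<or> alt_util Gam v T0 = v l + v m + ?G"
    "T0 = {l} \<Longrightarrow> alt_util Gam v T0 = v l"
    "T0 = {l,m} \<Longrightarrow> alt_util Gam v T0 = v l + v m + ?G"
    using T0 lm by auto
  have o0: "0 \<le> alt_util Gam v T0" using o[of "{}"] by simp
  have om: "v m \<le> alt_util Gam v T0" using o[of "{m}"] by simp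
  have ol: "v l \<le> alt_util Gam v T0" using o[of "{l}"] by simp
  have ok: "v k \<le> alt_util Gam v T0" for k using o[of "{k}"] by simp
  have olm: "v l + v m + ?G \<le> alt_util Gam v T0" using o[of "{l,m}"] lm by simp
  have opair: "v x + v y + Gam {x,y} \<le> alt_util Gam v T0" if "x \<noteq> y" for x y
    using o[of "{x,y}"] that by simp
  have case_empty: "?P {}"
  proof (cases "T0 = {l}")
    case True
    then show ?thesis using o0 aT0(2) c1 by (intro goal_l) simp
  next
    case False
    then have T: "T0 = {l,m}" using T0 by blast
    have a: "0 \<le> v l + v m + ?G" "v m \<le> v l + v m + ?G" using o0 om aT0(3)[OF T] by auto
    show ?thesis using sg
    proof (elim disjE)
      assume "?G > 0 \<and> sgn ?G = 1"
      then show ?thesis using a c1 c2 by (intro goal_lm) simp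
    next
      assume "?G = 0 \<and> sgn ?G = 0"
      then show ?thesis using a c1 c2 by (intro goal_l) simp
    next
      assume "?G < 0 \<and> sgn ?G = -1"
      then show ?thesis using a c1 c2 by (intro goal_l) simp
    qed
  qed
  have case_single: "?P {x}" for x
  proof -
    consider "x = l" | "x = m" | "x \<notin> {l,m}" by blast
    then show ?thesis
    proof cases
      case 1 then show ?thesis by (intro goal_l) simp
    next
      case 2
      show ?thesis
      proof (cases "T0 = {l}")
        case True
        have "v m \<le> v l" "0 \<le> v l" using om o0 aT0(2)[OF True] by auto
        note a = this
        show ?thesis using sg
        proof (elim disjE)
          assume "?G > 0 \<and> sgn ?G = 1"
          then show ?thesis using a c1 2 lm by (intro goal_lm) simp
        next
          assume "?G = 0 \<and> sgn ?G = 0"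
          then show ?thesis using a c1 2 lm by (intro goal_lm) simp
        next
          assume "?G < 0 \<and> sgn ?G = -1"
          then show ?thesis using a c1 c2 2 by (intro goal_l) simp
        qed
      next
        case False
        then have T: "T0 = {l,m}" using T0 by blast
        have "v l + ?G \<ge> 0" using om aT0(3)[OF T] by simp
        then show ?thesis using 2 c1 by (intro goal_lm) simp
      qed
    next
      case 3
      show ?thesis
      proof (cases "T0 = {l}")
        case True
        then show ?thesis using ok[of x] aT0(2)[OF True] c1 c4[OF 3] by (intro goal_l) simp
      next
        case False
        then have T: "T0 = {l,m}" using T0 by blast
        then show ?thesis using ok[of x] aT0(3)[OF T] c1 c3[OF 3] by (intro goal_lm) simp
      qed
    qed
  qed
  have key: "?P {p,q}" if pq: "p \<noteq> q" "q \<notin> {l,m}" for p q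
  proof -
    have Gpq: "Gam {p,q} \<le> 0" using Gn[OF pq(1)] pq(2) by auto
    consider "p = l" | "p = m" | "p \<notin> {l,m}" by blast
    then show ?thesis
    proof cases
      case 1
      show ?thesis
      proof (cases "T0 = {l}")
        case True
        then show ?thesis using opair[OF pq(1)] aT0(2)[OF True] c4[OF pq(2)] 1 pq(1)
          by (intro goal_l) simp
      next
        case False
        then have T: "T0 = {l,m}" using T0 by blast
        then show ?thesis using opair[OF pq(1)] aT0(3)[OF T] c3[OF pq(2)] 1 pq(1)
          by (intro goal_lm) simp
      qed
    next
      case 2
      show ?thesis
      proof (cases "T0 = {l}")
        case True
        have a: "v q \<le> v l" using ok[of q] aT0(2)[OF True] by simp
        show ?thesis using sg
        proof (elim disjE)
          assume "?G > 0 \<and> sgn ?G = 1"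
          then show ?thesis using a Gpq c1 c4[OF pq(2)] 2 pq(1) lm by (intro goal_lm) simp
        next
          assume "?G = 0 \<and> sgn ?G = 0"
          then show ?thesis using a Gpq c1 c4[OF pq(2)] 2 pq(1) lm by (intro goal_lm) simp
        next
          assume "?G < 0 \<and> sgn ?G = -1"
          then show ?thesis using opair[OF pq(1)] aT0(2)[OF True] c1 c2 c4[OF pq(2)] 2 pq(1)
            by (intro goal_l) simp
        qed
      next
        case False
        then have T: "T0 = {l,m}" using T0 by blast
        then show ?thesis using opair[OF pq(1)] aT0(3)[OF T] c1 c4[OF pq(2)] 2 pq(1)
          by (intro goal_lm) simp
      qed
    next
      case 3
      show ?thesis
      proof (cases "T0 = {l}")
        case True
        then show ?thesis using opair[OF pq(1)] aT0(2)[OF True] c1 c4[OF pq(2)] c4[OF 3] pq(1)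
          by (intro goal_l) simp
      next
        case False
        then have T: "T0 = {l,m}" using T0 by blast
        then show ?thesis using opair[OF pq(1)] aT0(3)[OF T] c1 c3[OF pq(2)] c4[OF 3] pq(1)
          by (intro goal_lm) simp
      qed
    qed
  qed
  show ?thesis
  proof
    fix S :: "'g set" assume "S \<in> choices"
    then show "?P S"
    proof (cases rule: choices_cases)
      case 1 then show ?thesis using case_empty by simp
    next
      case (2 x) then show ?thesis using case_single by simp
    next
      case (3 x y)
      show ?thesis
      proof (cases "y \<in> {l,m}")
        case False then show ?thesis using key[OF 3(1) False] 3 by simp
      next
        case yin: True
        show ?thesis
        proof (cases "x \<in> {l,m}")
          case False then show ?thesis using key[of y x] 3 by (simp add: insert_commute)
        next
          case True
          then have "S = {l,m}" using yin 3 by auto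
          then show ?thesis using lm by auto
        qed
      qed
    qed
  qed
qed


lemma meas_coord:
  fixes c :: "'g::finite \<Rightarrow> real"
  shows "(\<lambda>p::('g\<Rightarrow>real)\<times>('g\<Rightarrow>real). c j + fst p j + snd p j) \<in> borel_measurable borel"
proof -
  have "continuous_on UNIV (\<lambda>p::('g\<Rightarrow>real)\<times>('g\<Rightarrow>real). c j + fst p j + snd p j)"
    by (intro continuous_intros continuous_on_compose2[OF continuous_on_product_coordinates]) auto
  then show ?thesis by (rule borel_measurable_continuous_onI)
qed

lemma meas_alt:
  fixes c :: "'g::finite \<Rightarrow> real"
  shows "(\<lambda>p::('g\<Rightarrow>real)\<times>('g\<Rightarrow>real). alt_util Gam (\<lambda>j. c j + fst p j + snd p j) S) \<in> borel_measurable borel"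
  unfolding alt_util_def using meas_coord[of c] by measurable

lemma meas_choice:
  fixes c :: "'g::finite \<Rightarrow> real"
  shows "{p::('g\<Rightarrow>real)\<times>('g\<Rightarrow>real). choice Gam (\<lambda>j. c j + fst p j + snd p j) \<in> K} \<in> sets borel"
proof -
  define Q where "Q p S = (S \<in> choices \<and> (\<forall>S'\<in>choices. alt_util Gam (\<lambda>j. c j + fst p j + snd p j) S'
     \<le> alt_util Gam (\<lambda>j. c j + fst p j + snd p j) S))" for p S
  have eq: "{p. choice Gam (\<lambda>j. c j + fst p j + snd p j) \<in> K} =
     (\<Union>P\<in>{P::'g set\<Rightarrow>bool. (SOME S. P S) \<in> K}. {p. \<forall>S\<in>UNIV. Q p S = P S})"
    by (auto simp: choice_def Q_def fun_eq_iff[symmetric])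
  have "\<And>P. {p. \<forall>S\<in>UNIV. Q p S = P S} \<in> sets borel"
  proof -
    fix P :: "'g set \<Rightarrow> bool"
    have "Measurable.pred borel (\<lambda>p. \<forall>S\<in>UNIV. Q p S = P S)"
    proof (rule pred_intros_finite(3)[where I=UNIV and M=borel])
      fix S assume "S \<in> (UNIV :: 'g set set)"
      have "Measurable.pred borel (\<lambda>p. Q p S)"
        unfolding Q_def
      proof (intro pred_intros_conj1' pred_intros_finite(3) finite_choices)
        fix S' assume "S' \<in> (choices :: 'g set set)"
        show "Measurable.pred borel (\<lambda>p. alt_util Gam (\<lambda>j. c j + fst p j + snd p j) S'
            \<le> alt_util Gam (\<lambda>j. c j + fst p j + snd p j) S)"
          unfolding pred_def using meas_alt[where c=c and Gam=Gam] by simp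
      qed
      then show "Measurable.pred borel (\<lambda>p. Q p S = P S)" by (cases "P S") auto
    qed simp
    then show "{p. \<forall>S\<in>UNIV. Q p S = P S} \<in> sets borel" by (simp add: pred_def)
  qed
  then show ?thesis unfolding eq by (intro sets.finite_UN) auto
qed

lemma transfer:
  fixes M :: "'w measure" and Gam :: "'g::finite set \<Rightarrow> real"
    and alpha es et :: "'w \<Rightarrow> 'g \<Rightarrow> real" and cs ct :: "'g \<Rightarrow> real"
  assumes prob: "prob_space M"
    and rv_s: "(\<lambda>w. (alpha w, es w)) \<in> M \<rightarrow>\<^sub>M borel"
    and rv_t: "(\<lambda>w. (alpha w, et w)) \<in> M \<rightarrow>\<^sub>M borel"
    and stationary: "distr M borel (\<lambda>w. (alpha w, es w)) = distr M borel (\<lambda>w. (alpha w, et w))"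
    and ties: "AE w in M. no_ties Gam (\<lambda>j. ct j + alpha w j + et w j)"
    and det: "\<And>a e. no_ties Gam (\<lambda>j. ct j + a j + e j) \<Longrightarrow> choice Gam (\<lambda>j. cs j + a j + e j) \<in> K
               \<Longrightarrow> choice Gam (\<lambda>j. ct j + a j + e j) \<in> K"
  shows "measure M {w \<in> space M. choice Gam (\<lambda>j. cs j + alpha w j + es w j) \<in> K}
       \<le> measure M {w \<in> space M. choice Gam (\<lambda>j. ct j + alpha w j + et w j) \<in> K}"
proof -
  interpret prob_space M by (rule prob)
  define Es where "Es = {p::('g\<Rightarrow>real)\<times>('g\<Rightarrow>real). choice Gam (\<lambda>j. cs j + fst p j + snd p j) \<in> K}"
  define Et where "Et = {p::('g\<Rightarrow>real)\<times>('g\<Rightarrow>real). choice Gam (\<lambda>j. ct j + fst p j + snd p j) \<in> K}"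
  have Es: "Es \<in> sets borel" unfolding Es_def by (rule meas_choice)
  have Et: "Et \<in> sets borel" unfolding Et_def by (rule meas_choice)
  have "measure M {w \<in> space M. choice Gam (\<lambda>j. cs j + alpha w j + es w j) \<in> K}
      = measure M ((\<lambda>w. (alpha w, es w)) -` Es \<inter> space M)"
    by (rule arg_cong[where f="measure M"]) (auto simp: Es_def)
  also have "\<dots> = measure (distr M borel (\<lambda>w. (alpha w, es w))) Es"
    using measure_distr[OF rv_s Es] by simp
  also have "\<dots> = measure (distr M borel (\<lambda>w. (alpha w, et w))) Es"
    using stationary by simp
  also have "\<dots> = measure M ((\<lambda>w. (alpha w, et w)) -` Es \<inter> space M)"
    using measure_distr[OF rv_t Es] by simp
  also have "\<dots> \<le> measure M ((\<lambda>w. (alpha w, et w)) -` Et \<inter> space M)"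
  proof (rule finite_measure_mono_AE)
    show "AE x in M. x \<in> (\<lambda>w. (alpha w, et w)) -` Es \<inter> space M \<longrightarrow> x \<in> (\<lambda>w. (alpha w, et w)) -` Et \<inter> space M"
      using ties by eventually_elim (auto simp: Es_def Et_def intro: det)
    show "(\<lambda>w. (alpha w, et w)) -` Et \<inter> space M \<in> sets M"
      using measurable_sets[OF rv_t Et] .
  qed
  also have "\<dots> = measure M {w \<in> space M. choice Gam (\<lambda>j. ct j + alpha w j + et w j) \<in> K}"
    by (rule arg_cong[where f="measure M"]) (auto simp: Et_def)
  finally show ?thesis .
qed


theorem proposition5:
  fixes M :: "'w measure"
    and A B :: "'g :: finite"
    and Gam :: "'g set \<Rightarrow> real"
    and beta0 :: "real ^ 'k"
    and xs xt :: "'g \<Rightarrow> real ^ 'k"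
    and alpha es et :: "'w \<Rightarrow> 'g \<Rightarrow> real"
  assumes prob: "prob_space M"
    and AB: "A \<noteq> B"
    and Gam_nonpos: "\<And>S. card S = 2 \<Longrightarrow> S \<noteq> {A, B} \<Longrightarrow> Gam S \<le> 0"
    and rv_s: "(\<lambda>w. (alpha w, es w)) \<in> M \<rightarrow>\<^sub>M borel"
    and rv_t: "(\<lambda>w. (alpha w, et w)) \<in> M \<rightarrow>\<^sub>M borel"
    and stationary: "distr M borel (\<lambda>w. (alpha w, es w)) = distr M borel (\<lambda>w. (alpha w, et w))"
    and ties: "AE w in M. no_ties Gam (\<lambda>j. xs j \<bullet> beta0 + alpha w j + es w j)
                        \<and> no_ties Gam (\<lambda>j. xt j \<bullet> beta0 + alpha w j + et w j)"
  defines "\<delta>s \<equiv> \<lambda>j. xs j \<bullet> beta0"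
    and "\<delta>t \<equiv> \<lambda>j. xt j \<bullet> beta0"
    and "Ps \<equiv> \<lambda>K. measure M {w \<in> space M. choice Gam (\<lambda>j. xs j \<bullet> beta0 + alpha w j + es w j) \<in> K}"
    and "Pt \<equiv> \<lambda>K. measure M {w \<in> space M. choice Gam (\<lambda>j. xt j \<bullet> beta0 + alpha w j + et w j) \<in> K}"
  shows "(\<forall>j. Ps {{j}} > Pt {{j}} \<longrightarrow>
             \<delta>s j - \<delta>t j > 0 \<or> (\<exists>k. k \<noteq> j \<and> \<delta>s k - \<delta>t k < 0))
       \<and> (\<forall>j1 j2. j1 \<noteq> j2 \<longrightarrow> Ps {{j1, j2}} > Pt {{j1, j2}} \<longrightarrow>
             (\<exists>j\<in>{j1, j2}. \<delta>s j - \<delta>t j > 0) \<or> (\<exists>k. k \<notin> {j1, j2} \<and> \<delta>s k - \<delta>t k < 0))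
       \<and> (\<forall>l m. (l = A \<and> m = B \<or> l = B \<and> m = A) \<longrightarrow> Ps {{l}, {A, B}} > Pt {{l}, {A, B}} \<longrightarrow>
             \<delta>s l - \<delta>t l > 0
           \<or> (\<delta>s l + sgn (Gam {A, B}) * \<delta>s m) - (\<delta>t l + sgn (Gam {A, B}) * \<delta>t m) > 0
           \<or> (\<exists>k. k \<notin> {A, B} \<and> (\<delta>s m - \<delta>s k) - (\<delta>t m - \<delta>t k) > 0)
           \<or> (\<exists>k. k \<notin> {A, B} \<and> \<delta>s k - \<delta>t k < 0))"

proof -
  let ?cs = "\<lambda>j. xs j \<bullet> beta0" and ?ct = "\<lambda>j. xt j \<bullet> beta0"
  have tiesT: "AE w in M. no_ties Gam (\<lambda>j. ?ct j + alpha w j + et w j)"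
    using ties by eventually_elim simp
  have tr: "Ps K \<le> Pt K" if det: "\<And>a e. no_ties Gam (\<lambda>j. ?ct j + a j + e j) \<Longrightarrow> choice Gam (\<lambda>j. ?cs j + a j + e j) \<in> K
               \<Longrightarrow> choice Gam (\<lambda>j. ?ct j + a j + e j) \<in> K" for K
    unfolding Ps_def Pt_def
    using transfer[OF prob rv_s rv_t stationary tiesT, of ?cs K] det by simp
  have P1: "\<delta>s j - \<delta>t j > 0 \<or> (\<exists>k. k \<noteq> j \<and> \<delta>s k - \<delta>t k < 0)" if gt: "Ps {{j}} > Pt {{j}}" for j
  proof (rule ccontr)
    assume "\<not> ?thesis"
    then have h1: "\<delta>t j - \<delta>s j \<ge> 0" and h2: "\<And>k. k \<noteq> j \<Longrightarrow> \<delta>t k - \<delta>s k \<le> 0" by force+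
    have "Ps {{j}} \<le> Pt {{j}}"
    proof (rule tr)
      fix a e :: "'g \<Rightarrow> real"
      let ?v = "\<lambda>j. ?cs j + a j + e j" and ?v' = "\<lambda>j. ?ct j + a j + e j"
      assume nt: "no_ties Gam ?v'" and c: "choice Gam ?v \<in> {{j}}"
      have opt: "\<forall>S\<in>choices. alt_util Gam ?v S \<le> alt_util Gam ?v {j}"
        using choice_opt[of Gam ?v] c by simp
      have "\<forall>S\<in>choices. \<exists>T'\<in>{{j}}. alt_util Gam ?v' S \<le> alt_util Gam ?v' T'"
        by (rule keep_T[OF choices_simps(2) opt]) (use h1 h2 in \<open>auto simp: \<delta>s_def \<delta>t_def\<close>)
      then show "choice Gam ?v' \<in> {{j}}" by (intro choice_in[OF _ nt]) auto
    qed
    then show False using gt by simp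
  qed
  have P2: "(\<exists>j\<in>{j1, j2}. \<delta>s j - \<delta>t j > 0) \<or> (\<exists>k. k \<notin> {j1, j2} \<and> \<delta>s k - \<delta>t k < 0)"
    if ne: "j1 \<noteq> j2" and gt: "Ps {{j1, j2}} > Pt {{j1, j2}}" for j1 j2
  proof (rule ccontr)
    assume "\<not> ?thesis"
    then have h1: "\<And>j. j \<in> {j1,j2} \<Longrightarrow> \<delta>t j - \<delta>s j \<ge> 0" and h2: "\<And>k. k \<notin> {j1,j2} \<Longrightarrow> \<delta>t k - \<delta>s k \<le> 0"
      by force+
    have "Ps {{j1,j2}} \<le> Pt {{j1,j2}}"
    proof (rule tr)
      fix a e :: "'g \<Rightarrow> real"
      let ?v = "\<lambda>j. ?cs j + a j + e j" and ?v' = "\<lambda>j. ?ct j + a j + e j"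
      assume nt: "no_ties Gam ?v'" and c: "choice Gam ?v \<in> {{j1,j2}}"
      have opt: "\<forall>S\<in>choices. alt_util Gam ?v S \<le> alt_util Gam ?v {j1,j2}"
        using choice_opt[of Gam ?v] c by simp
      have "\<forall>S\<in>choices. \<exists>T'\<in>{{j1,j2}}. alt_util Gam ?v' S \<le> alt_util Gam ?v' T'"
        by (rule keep_T[OF choices_simps(3) opt]) (use h1 h2 in \<open>auto simp: \<delta>s_def \<delta>t_def\<close>)
      then show "choice Gam ?v' \<in> {{j1,j2}}" by (intro choice_in[OF _ nt]) auto
    qed
    then show False using gt by simp
  qed
  have P3: "\<delta>s l - \<delta>t l > 0
           \<or> (\<delta>s l + sgn (Gam {A, B}) * \<delta>s m) - (\<delta>t l + sgn (Gam {A, B}) * \<delta>t m) > 0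
           \<or> (\<exists>k. k \<notin> {A, B} \<and> (\<delta>s m - \<delta>s k) - (\<delta>t m - \<delta>t k) > 0)
           \<or> (\<exists>k. k \<notin> {A, B} \<and> \<delta>s k - \<delta>t k < 0)"
    if lm: "l = A \<and> m = B \<or> l = B \<and> m = A" and gt: "Ps {{l}, {A, B}} > Pt {{l}, {A, B}}" for l m
  proof (rule ccontr)
    assume neg: "\<not> ?thesis"
    have ABlm: "{A,B} = {l,m}" using lm by auto
    have lnm: "l \<noteq> m" using lm AB by auto
    have "Ps {{l}, {l,m}} \<le> Pt {{l}, {l,m}}"
    proof (rule tr)
      fix a e :: "'g \<Rightarrow> real"
      let ?v = "\<lambda>j. ?cs j + a j + e j" and ?v' = "\<lambda>j. ?ct j + a j + e j"
      assume nt: "no_ties Gam ?v'" and c: "choice Gam ?v \<in> {{l},{l,m}}"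
      have opt: "\<forall>S\<in>choices. alt_util Gam ?v S \<le> alt_util Gam ?v (choice Gam ?v)"
        using choice_opt[of Gam ?v] by simp
      have "\<forall>S\<in>choices. \<exists>T\<in>{{l},{l,m}}. alt_util Gam ?v' S \<le> alt_util Gam ?v' T"
      proof (rule part3_det[OF lnm _ _ opt])
        show "\<And>x y. x \<noteq> y \<Longrightarrow> {x, y} \<noteq> {l, m} \<Longrightarrow> Gam {x, y} \<le> 0"
          using Gam_nonpos ABlm by (simp add: card_insert_if)
        show "choice Gam ?v = {l} \<or> choice Gam ?v = {l, m}" using c by simp
      qed (use neg ABlm in \<open>auto simp: \<delta>s_def \<delta>t_def algebra_simps\<close>)
      then show "choice Gam ?v' \<in> {{l},{l,m}}" by (intro choice_in[OF _ nt]) auto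
    qed
    then show False using gt ABlm by simp
  qed
  show ?thesis using P1 P2 P3 by blast
qed

end
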